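(* Consider a graph orientation instance whose graph $G=(V,E)$ is a star with center $v$ and leaf set $H_v=V\setminus\{v\}$, with arbitrary query costs. Let $L$ be the algorithm that queries $v$ and then queries every leaf that is mandatory, and $R$ the algorithm that queries all leaves and then queries $v$ if it is mandatory; so $\mathbb E[L]=c_v+\sum_{u\in H_v}p_uc_u$ and $\mathbb E[R]=p_vc_v+c(H_v)$. If $\mathbb E[L]=\mathbb E[R]$, then $\mathbb E[L]\le\frac43\mathbb E[\mathrm{OPT}]$.
   Context: An instance of the graph orientation problem consists of a graph $G=(V,E)$ and, for each vertex $u$, a query cost $c_u\ge0$ and a continuous distribution $d_u$ with minimal support interval $I_u$; for each edge the two intervals intersect. Weights $w_u\sim d_u$ are independent and querying $u$ reveals $w_u$ at cost $c_u$; $c(S)=\sum_{u\in S}c_u$. For a realization, $Q$ is a feasible query set if knowing $w_u$ for $u\in Q$ and only the intervals for unqueried vertices suffices to identify, for every edge, its endpoint of minimum weight; $\mathbb E[\mathrm{OPT}]$ is the expected minimum cost of a feasible query set. A vertex is mandatory for a realization if it belongs to every feasible query set; $p_u$ is the probability that $u$ is mandatory. (In a star, the center $v$ is mandatory iff $w_u\in I_v$ for some leaf $u$, and a leaf $u$ is mandatory iff $w_v\in I_u$.) *)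

theory Defs
  imports "HOL-Probability.Probability"
begin

definition min_support_interval :: "real measure \<Rightarrow> real set \<Rightarrow> bool" where
  "min_support_interval M J \<longleftrightarrow>
     is_interval J \<and> J \<in> sets borel \<and> measure M J = 1 \<and>
     (\<forall>J'. is_interval J' \<and> J' \<in> sets borel \<and> measure M J' = 1 \<longrightarrow> J \<subseteq> J')"

definition orientation_instance ::
  "'a set \<Rightarrow> 'a set set \<Rightarrow> ('a \<Rightarrow> real) \<Rightarrow> ('a \<Rightarrow> real measure) \<Rightarrow> ('a \<Rightarrow> real set) \<Rightarrow> bool" where
  "orientation_instance V E c d I \<longleftrightarrow>
     finite V \<and>
     (\<forall>e\<in>E. \<exists>x y. e = {x, y} \<and> x \<noteq> y \<and> x \<in> V \<and> y \<in> V) \<and>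
     (\<forall>u\<in>V. c u \<ge> 0 \<and> prob_space (d u) \<and> sets (d u) = sets borel \<and>
              (\<forall>x. measure (d u) {x} = 0) \<and> min_support_interval (d u) (I u)) \<and>
     (\<forall>e\<in>E. \<forall>x\<in>e. \<forall>y\<in>e. I x \<inter> I y \<noteq> {})"

definition consistent ::
  "'a set \<Rightarrow> ('a \<Rightarrow> real set) \<Rightarrow> 'a set \<Rightarrow> ('a \<Rightarrow> real) \<Rightarrow> ('a \<Rightarrow> real) \<Rightarrow> bool" where
  "consistent V I Q w w' \<longleftrightarrow> (\<forall>u\<in>Q. w' u = w u) \<and> (\<forall>u\<in>V - Q. w' u \<in> I u)"

definition feasible_query_set ::
  "'a set \<Rightarrow> 'a set set \<Rightarrow> ('a \<Rightarrow> real set) \<Rightarrow> ('a \<Rightarrow> real) \<Rightarrow> 'a set \<Rightarrow> bool" where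
  "feasible_query_set V E I w Q \<longleftrightarrow>
     Q \<subseteq> V \<and> (\<forall>e\<in>E. \<exists>x\<in>e. \<forall>w'. consistent V I Q w w' \<longrightarrow> (\<forall>y\<in>e. w' x \<le> w' y))"

definition mandatory ::
  "'a set \<Rightarrow> 'a set set \<Rightarrow> ('a \<Rightarrow> real set) \<Rightarrow> ('a \<Rightarrow> real) \<Rightarrow> 'a \<Rightarrow> bool" where
  "mandatory V E I w u \<longleftrightarrow> u \<in> V \<and> (\<forall>Q. feasible_query_set V E I w Q \<longrightarrow> u \<in> Q)"

definition opt_cost ::
  "'a set \<Rightarrow> 'a set set \<Rightarrow> ('a \<Rightarrow> real set) \<Rightarrow> ('a \<Rightarrow> real) \<Rightarrow> ('a \<Rightarrow> real) \<Rightarrow> real" where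
  "opt_cost V E I c w = Min {sum c Q | Q. feasible_query_set V E I w Q}"

definition expected_opt ::
  "'a set \<Rightarrow> 'a set set \<Rightarrow> ('a \<Rightarrow> real set) \<Rightarrow> ('a \<Rightarrow> real) \<Rightarrow> ('a \<Rightarrow> real measure) \<Rightarrow> real" where
  "expected_opt V E I c d = integral\<^sup>L (PiM V d) (opt_cost V E I c)"

definition mandatory_prob ::
  "'a set \<Rightarrow> 'a set set \<Rightarrow> ('a \<Rightarrow> real set) \<Rightarrow> ('a \<Rightarrow> real measure) \<Rightarrow> 'a \<Rightarrow> real" where
  "mandatory_prob V E I d u = measure (PiM V d) {w \<in> space (PiM V d). mandatory V E I w u}"

end

theory Submission
  imports Defs
begin


definition out :: "real set \<Rightarrow> real \<Rightarrow> bool" where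
  "out S x \<longleftrightarrow> (\<forall>y\<in>S. x \<le> y) \<or> (\<forall>y\<in>S. y \<le> x)"

lemma msi_props:
  assumes P: "prob_space M" and S: "sets M = sets borel" and A: "\<forall>x. measure M {x} = 0"
    and J: "min_support_interval M J"
  shows "J \<noteq> {}" and "\<And>z. z\<in>J \<Longrightarrow> \<exists>y\<in>J. z < y" and "\<And>z. z\<in>J \<Longrightarrow> \<exists>y\<in>J. y < z"
    and "J \<in> sets borel"
proof -
  interpret prob_space M by fact
  have iv: "is_interval J" and Jb: "J \<in> sets borel" and m1: "measure M J = 1"
    and minJ: "\<And>J'. is_interval J' \<Longrightarrow> J' \<in> sets borel \<Longrightarrow> measure M J' = 1 \<Longrightarrow> J \<subseteq> J'"
    using J unfolding min_support_interval_def by auto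
  show "J \<in> sets borel" by fact
  show "J \<noteq> {}" using m1 by auto
  have rem: "measure M (J - {z}) = 1" for z
  proof -
    have "measure M (J - {z}) = measure M J - measure M (J \<inter> {z})"
      using Jb S by (simp add: Diff_Int2 finite_measure_Diff' sets.Int)
    also have "measure M (J \<inter> {z}) = 0"
    proof (cases "z \<in> J")
      case True then show ?thesis using A by (simp add: Int_absorb1)
    next
      case False then show ?thesis by simp
    qed
    finally show ?thesis using m1 by simp
  qed
  show "\<exists>y\<in>J. z < y" if z: "z \<in> J" for z
  proof (rule ccontr)
    assume "\<not> ?thesis"
    hence le: "\<forall>y\<in>J. y \<le> z" by auto
    have eq: "J - {z} = J \<inter> {..<z}" using le by auto
    have "is_interval (J - {z})" unfolding eq
      using iv by (auto simp: is_interval_1)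
    moreover have "J - {z} \<in> sets borel" using Jb by auto
    ultimately have "J \<subseteq> J - {z}" using minJ rem by blast
    thus False using z by auto
  qed
  show "\<exists>y\<in>J. y < z" if z: "z \<in> J" for z
  proof (rule ccontr)
    assume "\<not> ?thesis"
    hence le: "\<forall>y\<in>J. z \<le> y" by auto
    have eq: "J - {z} = J \<inter> {z<..}" using le by auto
    have "is_interval (J - {z})" unfolding eq
      using iv by (auto simp: is_interval_1)
    moreover have "J - {z} \<in> sets borel" using Jb by auto
    ultimately have "J \<subseteq> J - {z}" using minJ rem by blast
    thus False using z by auto
  qed
qed

locale star =
  fixes v :: 'a and H :: "'a set" and I :: "'a \<Rightarrow> real set"
  assumes vH: "v \<notin> H"
    and ne: "\<And>x. x \<in> insert v H \<Longrightarrow> I x \<noteq> {}"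
    and up: "\<And>x z. x \<in> insert v H \<Longrightarrow> z \<in> I x \<Longrightarrow> \<exists>y\<in>I x. z < y"
    and dn: "\<And>x z. x \<in> insert v H \<Longrightarrow> z \<in> I x \<Longrightarrow> \<exists>y\<in>I x. y < z"
    and ov: "\<And>u. u \<in> H \<Longrightarrow> I u \<inter> I v \<noteq> {}"
begin

abbreviation "V \<equiv> insert v H"
abbreviation "EE \<equiv> (\<lambda>u. {v, u}) ` H"

definition base :: "'a set \<Rightarrow> ('a \<Rightarrow> real) \<Rightarrow> 'a \<Rightarrow> real" where
  "base Q w = (\<lambda>x. if x \<in> Q then w x else (SOME y. y \<in> I x))"

lemma base_cons:
  assumes "Q \<subseteq> V" "x \<in> V - Q \<Longrightarrow> y \<in> I x" "x \<in> Q \<Longrightarrow> y = w x"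
  shows "consistent V I Q w ((base Q w)(x := y))"
proof -
  have "base Q w z \<in> I z" if "z \<in> V - Q" for z
    using ne[of z] that some_in_eq unfolding base_def by auto
  thus ?thesis using assms unfolding consistent_def base_def by auto
qed

lemma base_cons2:
  assumes "Q \<subseteq> V" "x \<in> V - Q \<Longrightarrow> y \<in> I x" "x \<in> Q \<Longrightarrow> y = w x"
       "x' \<in> V - Q \<Longrightarrow> y' \<in> I x'" "x' \<in> Q \<Longrightarrow> y' = w x'"
  shows "consistent V I Q w ((base Q w)(x := y, x' := y'))"
proof -
  have "base Q w z \<in> I z" if "z \<in> V - Q" for z
    using ne[of z] that some_in_eq unfolding base_def by auto
  thus ?thesis using assms unfolding consistent_def base_def by auto
qed

lemma edge:
  assumes Q: "Q \<subseteq> V" and u: "u \<in> H"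
  shows "(\<exists>x\<in>{v,u}. \<forall>w'. consistent V I Q w w' \<longrightarrow> (\<forall>y\<in>{v,u}. w' x \<le> w' y)) \<longleftrightarrow>
     ((v \<in> Q \<or> u \<in> Q) \<and> (v \<in> Q \<and> u \<notin> Q \<longrightarrow> out (I u) (w v)) \<and> (v \<notin> Q \<and> u \<in> Q \<longrightarrow> out (I v) (w u)))"
    (is "?L \<longleftrightarrow> ?R")
proof
  have uv: "u \<noteq> v" using u vH by auto
  assume ?L
  then obtain x where x: "x \<in> {v,u}" and H1: "\<And>w'. consistent V I Q w w' \<Longrightarrow> w' x \<le> w' v \<and> w' x \<le> w' u"
    by auto
  have 1: "v \<in> Q \<or> u \<in> Q"
  proof (rule ccontr)
    assume nq: "\<not> (v \<in> Q \<or> u \<in> Q)"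
    obtain z where z: "z \<in> I u" "z \<in> I v" using ov[OF u] by auto
    show False
    proof (cases "x = v")
      case True
      obtain y where y: "y \<in> I v" "z < y" using up[of v z] z by auto
      have "consistent V I Q w ((base Q w)(v := y, u := z))"
        by (rule base_cons2[OF Q]) (use nq y z u in auto)
      from H1[OF this] True uv y show False by auto
    next
      case False
      hence xu: "x = u" using x by auto
      obtain y where y: "y \<in> I v" "y < z" using dn[of v z] z by auto
      have "consistent V I Q w ((base Q w)(v := y, u := z))"
        by (rule base_cons2[OF Q]) (use nq y z u in auto)
      from H1[OF this] xu uv y show False by auto
    qed
  qed
  have 2: "out (I u) (w v)" if vq: "v \<in> Q" and uq: "u \<notin> Q"
  proof (cases "x = v")
    case True
    have "w v \<le> y" if "y \<in> I u" for y
    proof -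
      have "consistent V I Q w ((base Q w)(u := y))"
        by (rule base_cons[OF Q]) (use uq that u in auto)
      from H1[OF this] True uv vq show ?thesis by (auto simp: base_def)
    qed
    thus ?thesis unfolding out_def by auto
  next
    case False
    hence xu: "x = u" using x by auto
    have "y \<le> w v" if "y \<in> I u" for y
    proof -
      have "consistent V I Q w ((base Q w)(u := y))"
        by (rule base_cons[OF Q]) (use uq that u in auto)
      from H1[OF this] xu uv vq show ?thesis by (auto simp: base_def)
    qed
    thus ?thesis unfolding out_def by auto
  qed
  have 3: "out (I v) (w u)" if vq: "v \<notin> Q" and uq: "u \<in> Q"
  proof (cases "x = v")
    case True
    have "y \<le> w u" if "y \<in> I v" for y
    proof -
      have "consistent V I Q w ((base Q w)(v := y))"
        by (rule base_cons[OF Q]) (use vq that u in auto)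
      from H1[OF this] True uv uq show ?thesis by (auto simp: base_def)
    qed
    thus ?thesis unfolding out_def by auto
  next
    case False
    hence xu: "x = u" using x by auto
    have "w u \<le> y" if "y \<in> I v" for y
    proof -
      have "consistent V I Q w ((base Q w)(v := y))"
        by (rule base_cons[OF Q]) (use vq that u in auto)
      from H1[OF this] xu uv uq show ?thesis by (auto simp: base_def)
    qed
    thus ?thesis unfolding out_def by auto
  qed
  show ?R using 1 2 3 by blast
next
  assume R: ?R
  have uv: "u \<noteq> v" using u vH by auto
  show ?L
  proof (cases "v \<in> Q")
    case vq: True
    show ?thesis
    proof (cases "u \<in> Q")
      case uq: True
      show ?thesis
      proof (cases "w v \<le> w u")
        case True
        thus ?thesis using vq uq by (intro bexI[of _ v]) (auto simp: consistent_def)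
      next
        case False
        thus ?thesis using vq uq by (intro bexI[of _ u]) (auto simp: consistent_def)
      qed
    next
      case uq: False
      hence o: "out (I u) (w v)" using R vq by auto
      show ?thesis
      proof (cases "\<forall>y\<in>I u. w v \<le> y")
        case True
        thus ?thesis using vq uq u by (intro bexI[of _ v]) (auto simp: consistent_def)
      next
        case False
        hence "\<forall>y\<in>I u. y \<le> w v" using o unfolding out_def by auto
        thus ?thesis using vq uq u by (intro bexI[of _ u]) (auto simp: consistent_def)
      qed
    qed
  next
    case vq: False
    hence uq: "u \<in> Q" using R by auto
    hence o: "out (I v) (w u)" using R vq by auto
    show ?thesis
    proof (cases "\<forall>y\<in>I v. w u \<le> y")
      case True
      thus ?thesis using vq uq u by (intro bexI[of _ u]) (auto simp: consistent_def)
    next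
      case False
      hence "\<forall>y\<in>I v. y \<le> w u" using o unfolding out_def by auto
      thus ?thesis using vq uq u by (intro bexI[of _ v]) (auto simp: consistent_def)
    qed
  qed
qed

lemma ball_img: "(\<forall>e\<in>f ` A. P e) = (\<forall>x\<in>A. P (f x))" by blast

lemma feas:
  "feasible_query_set V EE I w Q \<longleftrightarrow> Q \<subseteq> V \<and>
    (\<forall>u\<in>H. (v \<in> Q \<or> u \<in> Q) \<and> (v \<in> Q \<and> u \<notin> Q \<longrightarrow> out (I u) (w v)) \<and> (v \<notin> Q \<and> u \<in> Q \<longrightarrow> out (I v) (w u)))"
proof -
  have 1: "(\<forall>e\<in>EE. \<exists>x\<in>e. \<forall>w'. consistent V I Q w w' \<longrightarrow> (\<forall>y\<in>e. w' x \<le> w' y))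
     \<longleftrightarrow> (\<forall>u\<in>H. \<exists>x\<in>{v,u}. \<forall>w'. consistent V I Q w w' \<longrightarrow> (\<forall>y\<in>{v,u}. w' x \<le> w' y))"
    by (rule ball_img)
  have 2: "(\<forall>u\<in>H. \<exists>x\<in>{v,u}. \<forall>w'. consistent V I Q w w' \<longrightarrow> (\<forall>y\<in>{v,u}. w' x \<le> w' y))
     \<longleftrightarrow> (\<forall>u\<in>H. (v \<in> Q \<or> u \<in> Q) \<and> (v \<in> Q \<and> u \<notin> Q \<longrightarrow> out (I u) (w v)) \<and> (v \<notin> Q \<and> u \<in> Q \<longrightarrow> out (I v) (w u)))"
    if "Q \<subseteq> V" by (rule ball_cong[OF refl], rule edge[OF that])
  show ?thesis
  proof (cases "Q \<subseteq> V")
    case True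
    show ?thesis unfolding feasible_query_set_def by (simp only: 1 2[OF True])
  next
    case False
    thus ?thesis unfolding feasible_query_set_def by (simp only: simp_thms)
  qed
qed

lemma mand_v: "mandatory V EE I w v \<longleftrightarrow> \<not>(\<forall>u\<in>H. out (I v) (w u))"
proof
  assume m: "mandatory V EE I w v"
  show "\<not>(\<forall>u\<in>H. out (I v) (w u))"
  proof
    assume a: "\<forall>u\<in>H. out (I v) (w u)"
    have "feasible_query_set V EE I w H" unfolding feas using a vH by auto
    thus False using m vH unfolding mandatory_def by auto
  qed
next
  assume a: "\<not>(\<forall>u\<in>H. out (I v) (w u))"
  show "mandatory V EE I w v" unfolding mandatory_def
  proof (intro conjI allI impI)
    fix Q assume "feasible_query_set V EE I w Q"
    hence f: "\<forall>u\<in>H. (v \<in> Q \<or> u \<in> Q) \<and> (v \<notin> Q \<and> u \<in> Q \<longrightarrow> out (I v) (w u))"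
      unfolding feas by auto
    show "v \<in> Q" using f a by blast
  qed simp
qed

lemma mand_u:
  assumes u: "u \<in> H"
  shows "mandatory V EE I w u \<longleftrightarrow> \<not> out (I u) (w v)"
proof
  assume m: "mandatory V EE I w u"
  show "\<not> out (I u) (w v)"
  proof
    assume a: "out (I u) (w v)"
    have "feasible_query_set V EE I w (V - {u})" unfolding feas using a vH u by auto
    thus False using m unfolding mandatory_def by auto
  qed
next
  assume a: "\<not> out (I u) (w v)"
  show "mandatory V EE I w u" unfolding mandatory_def
  proof (intro conjI allI impI)
    fix Q assume "feasible_query_set V EE I w Q"
    hence f: "(v \<in> Q \<or> u \<in> Q) \<and> (v \<in> Q \<and> u \<notin> Q \<longrightarrow> out (I u) (w v))"
      unfolding feas using u by auto
    show "u \<in> Q" using f a by blast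
  qed (use u in simp)
qed

lemma opt:
  assumes fin: "finite H" and c: "\<And>x. x \<in> V \<Longrightarrow> c x \<ge> 0"
  shows "opt_cost V EE I c w = (if \<forall>u\<in>H. out (I v) (w u)
      then min (c v + sum c {u\<in>H. \<not> out (I u) (w v)}) (sum c H)
      else c v + sum c {u\<in>H. \<not> out (I u) (w v)})" (is "_ = ?val")
proof -
  define M where "M = {u\<in>H. \<not> out (I u) (w v)}"
  let ?S = "{sum c Q | Q. feasible_query_set V EE I w Q}"
  have finS: "finite ?S"
  proof (rule finite_subset)
    show "?S \<subseteq> sum c ` Pow V" unfolding feas by auto
    show "finite (sum c ` Pow V)" using fin by simp
  qed
  have vM: "v \<notin> M" using vH M_def by auto
  have finM: "finite M" using fin M_def by auto
  have f1: "feasible_query_set V EE I w (insert v M)" unfolding feas M_def by auto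
  have s1: "sum c (insert v M) = c v + sum c M" using vM finM by simp
  have lb: "?val \<le> sum c Q" if fQ: "feasible_query_set V EE I w Q" for Q
  proof -
    have QV: "Q \<subseteq> V" and f: "\<forall>u\<in>H. (v \<in> Q \<or> u \<in> Q) \<and> (v \<in> Q \<and> u \<notin> Q \<longrightarrow> out (I u) (w v)) \<and> (v \<notin> Q \<and> u \<in> Q \<longrightarrow> out (I v) (w u))"
      using fQ unfolding feas by auto
    have finQ: "finite Q" using QV fin finite_subset by auto
    show ?thesis
    proof (cases "v \<in> Q")
      case True
      have "insert v M \<subseteq> Q" using True f M_def by auto
      hence "sum c (insert v M) \<le> sum c Q"
        by (rule sum_mono2[OF finQ]) (use QV c in auto)
      thus ?thesis using s1 M_def by auto
    next
      case False
      have HQ: "H \<subseteq> Q" using False f by auto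
      have ao: "\<forall>u\<in>H. out (I v) (w u)" using False f HQ by auto
      have "sum c H \<le> sum c Q"
        by (rule sum_mono2[OF finQ HQ]) (use QV c in auto)
      thus ?thesis using ao M_def by auto
    qed
  qed
  have mem: "?val \<in> ?S"
  proof (cases "(\<forall>u\<in>H. out (I v) (w u)) \<and> sum c H \<le> c v + sum c M")
    case True
    have "feasible_query_set V EE I w H" unfolding feas using True vH by auto
    thus ?thesis using True M_def by auto
  next
    case False
    hence "?val = sum c (insert v M)" using s1 M_def by auto
    thus ?thesis using f1 by blast
  qed
  show ?thesis unfolding opt_cost_def
  proof (rule Min_eqI[OF finS])
    fix y assume "y \<in> ?S"
    then obtain Q where "y = sum c Q" "feasible_query_set V EE I w Q" by blast
    thus "?val \<le> y" using lb by simp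
  qed (rule mem)
qed

end



lemma ar1:
  fixes a C cv k :: real
  assumes "0 \<le> a" "a \<le> C" "0 \<le> cv" "k = min cv C"
  shows "a + k - k / C * a \<le> min (cv + a) C"
proof (cases "C = 0")
  case True thus ?thesis using assms by auto
next
  case False
  hence C: "C > 0" using assms by auto
  have k0: "0 \<le> k" "k \<le> C" "k \<le> cv" using assms C by auto
  have "k / C * a \<ge> 0" using k0 C assms by auto
  hence 1: "a + k - k / C * a \<le> cv + a" using k0 by linarith
  have "k * (C - a) \<le> C * (C - a)" using k0 assms by (intro mult_right_mono) auto
  hence "k - k / C * a \<le> C - a" using C by (simp add: field_simps)
  hence 2: "a + k - k / C * a \<le> C" by linarith
  show ?thesis using 1 2 by auto
qed

lemma ar2:
  fixes m C cv k r :: real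
  assumes "0 \<le> m" "0 \<le> cv" "0 \<le> r" "r \<le> 1" "C = m + r * cv" "k = min cv C"
  shows "cv + m \<le> 4 / 3 * (m + (cv - r * cv) + r * k - k / C * (r * m))"
proof (cases "C = 0")
  case True
  hence "m = 0" "r * cv = 0" using assms by (smt (verit) mult_nonneg_nonneg)+
  thus ?thesis using True assms by auto
next
  case False
  hence C: "C > 0" using assms by (smt (verit) mult_nonneg_nonneg)
  show ?thesis
  proof (cases "cv \<le> C")
    case True
    hence k: "k = cv" using assms by auto
    define t where "t = r * cv"
    have tc: "t \<le> cv" "0 \<le> t" using assms unfolding t_def by (auto simp: mult_left_le_one_le)
    have Ct: "C = m + t" using assms unfolding t_def by simp
    have "C * C - 4 * t * m = (m - t)^2" unfolding Ct by (simp add: power2_eq_square algebra_simps)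
    hence "4 * t * m \<le> C * C" by (smt (verit) zero_le_power2)
    hence "4 * t * m / C \<le> C" using C by (simp add: divide_simps)
    hence z: "4 * (t * m / C) \<le> C" by simp
    have e: "m + (cv - r * cv) + r * k - k / C * (r * m) = m + cv - t * m / C"
      using k unfolding t_def by simp
    have Cle: "C \<le> m + cv" using tc Ct by simp
    have "cv + m \<le> 4 / 3 * (m + cv - t * m / C)"
    proof -
      define zz where "zz = t * m / C"
      have "4 * zz \<le> m + cv" using z Cle unfolding zz_def by linarith
      hence "cv + m \<le> 4 / 3 * (m + cv - zz)" by (simp add: field_simps)
      thus ?thesis unfolding zz_def .
    qed
    thus ?thesis unfolding e .
  next
    case False
    hence k: "k = C" using assms by auto
    have e: "r * k - k / C * (r * m) = r * r * cv" using C k assms by (simp add: field_simps)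
    have "0 \<le> cv * (1 - 2*r)^2" using assms by simp
    hence q: "0 \<le> cv - 4 * (r * cv) + 4 * (r * r * cv)" by (simp add: power2_eq_square algebra_simps)
    have e2: "m + (cv - r * cv) + r * k - k / C * (r * m) = m + cv - r * cv + r * r * cv"
      using e by simp
    have "cv + m \<le> 4 / 3 * (m + cv - r * cv + r * r * cv)" using q assms(1) by (simp add: field_simps)
    thus ?thesis unfolding e2 .
  qed
qed


lemma prod_int:
  fixes d :: "'a \<Rightarrow> real measure" and f :: "'a \<Rightarrow> real \<Rightarrow> real"
  assumes fin: "finite V" and ps: "\<And>i. i \<in> V \<Longrightarrow> prob_space (d i)"
    and int: "\<And>i. i \<in> V \<Longrightarrow> integrable (d i) (f i)"
  shows "(\<integral>x. (\<Prod>i\<in>V. f i (x i)) \<partial>PiM V d) = (\<Prod>i\<in>V. integral\<^sup>L (d i) (f i))"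
proof -
  define M where "M i = (if i \<in> V then d i else count_space {undefined})" for i
  interpret M': prob_space "M i" for i
    using ps by (cases "i \<in> V") (auto simp: M_def intro!: prob_spaceI)
  interpret product_prob_space M V by unfold_locales
  have eq: "PiM V M = PiM V d" by (rule PiM_cong) (auto simp: M_def)
  have "(\<integral>x. (\<Prod>i\<in>V. f i (x i)) \<partial>PiM V M) = (\<Prod>i\<in>V. integral\<^sup>L (M i) (f i))"
    by (rule product_integral_prod[OF fin]) (use int in \<open>auto simp: M_def\<close>)
  also have "\<dots> = (\<Prod>i\<in>V. integral\<^sup>L (d i) (f i))"
    by (rule prod.cong) (auto simp: M_def)
  finally show ?thesis unfolding eq .
qed

lemma out_borel: "{x. out S x} \<in> sets borel"
proof -
  have "{x. out S x} = (\<Inter>y\<in>S. {..y}) \<union> (\<Inter>y\<in>S. {y..})" unfolding out_def by auto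
  moreover have "closed ((\<Inter>y\<in>S. {..y}) \<union> (\<Inter>y\<in>S. {y..}))"
    by (intro closed_Un closed_INT) auto
  ultimately show ?thesis by (simp add: borel_closed)
qed



theorem lemmaC1:
  fixes v :: 'a and H :: "'a set" and c :: "'a \<Rightarrow> real"
    and d :: "'a \<Rightarrow> real measure" and I :: "'a \<Rightarrow> real set"
  assumes "v \<notin> H"
    and "orientation_instance (insert v H) ((\<lambda>u. {v, u}) ` H) c d I"
    and "c v + (\<Sum>u\<in>H. mandatory_prob (insert v H) ((\<lambda>u. {v, u}) ` H) I d u * c u)
         = mandatory_prob (insert v H) ((\<lambda>u. {v, u}) ` H) I d v * c v + sum c H"
  shows "c v + (\<Sum>u\<in>H. mandatory_prob (insert v H) ((\<lambda>u. {v, u}) ` H) I d u * c u)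
         \<le> 4 / 3 * expected_opt (insert v H) ((\<lambda>u. {v, u}) ` H) I c d"
proof -
  let ?V = "insert v H" 
  let ?E = "(\<lambda>u. {v, u}) ` H"
  note inst = assms(2)[unfolded orientation_instance_def]
  have finV: "finite ?V" using inst by (rule conjunct1)
  have allv: "\<forall>u\<in>?V. c u \<ge> 0 \<and> prob_space (d u) \<and> sets (d u) = sets borel \<and>
              (\<forall>x. measure (d u) {x} = 0) \<and> min_support_interval (d u) (I u)"
    using inst by (rule conjunct2[THEN conjunct2, THEN conjunct1])
  have edg: "\<forall>e\<in>?E. \<forall>x\<in>e. \<forall>y\<in>e. I x \<inter> I y \<noteq> {}"
    using inst by (rule conjunct2[THEN conjunct2, THEN conjunct2])
  have finH: "finite H" using finV by simp
  have cnn: "\<And>x. x \<in> ?V \<Longrightarrow> 0 \<le> c x" using bspec[OF allv] by blast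
  have ps: "\<And>x. x \<in> ?V \<Longrightarrow> prob_space (d x)" using bspec[OF allv] by blast
  have sb: "\<And>x. x \<in> ?V \<Longrightarrow> sets (d x) = sets borel" using bspec[OF allv] by blast
  have at: "\<And>x. x \<in> ?V \<Longrightarrow> \<forall>z. measure (d x) {z} = 0" using bspec[OF allv] by blast
  have ms: "\<And>x. x \<in> ?V \<Longrightarrow> min_support_interval (d x) (I x)" using bspec[OF allv] by blast
  have ovl: "I u \<inter> I v \<noteq> {}" if u: "u \<in> H" for u
  proof -
    have "{v,u} \<in> ?E" using u by auto
    hence "\<forall>x\<in>{v,u}. \<forall>y\<in>{v,u}. I x \<inter> I y \<noteq> {}" by (rule bspec[OF edg])
    thus ?thesis by auto
  qed
  interpret st: star v H I
  proof unfold_locales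
    show "v \<notin> H" by fact
  next
    fix x assume x: "x \<in> ?V"
    show "I x \<noteq> {}" by (rule msi_props(1)[OF ps[OF x] sb[OF x] at[OF x] ms[OF x]])
  next
    fix x z assume x: "x \<in> ?V" and z: "z \<in> I x"
    show "\<exists>y\<in>I x. z < y" by (rule msi_props(2)[OF ps[OF x] sb[OF x] at[OF x] ms[OF x] z])
  next
    fix x z assume x: "x \<in> ?V" and z: "z \<in> I x"
    show "\<exists>y\<in>I x. y < z" by (rule msi_props(3)[OF ps[OF x] sb[OF x] at[OF x] ms[OF x] z])
  next
    fix u assume "u \<in> H" thus "I u \<inter> I v \<noteq> {}" by (rule ovl)
  qed
  define P where "P = PiM ?V d"
  interpret P: prob_space P unfolding P_def by (rule prob_space_PiM) (rule ps)
  define go where "go u = (indicator (- {x. out (I u) x}) :: real \<Rightarrow> real)" for u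
  define ho where "ho = (indicator {x. out (I v) x} :: real \<Rightarrow> real)"
  have gob: "go u \<in> borel_measurable borel" for u
    unfolding go_def by (intro borel_measurable_indicator borel_comp out_borel)
  have hob: "ho \<in> borel_measurable borel"
    unfolding ho_def by (intro borel_measurable_indicator out_borel)
  have bint_d: "integrable (d x) f" if x: "x \<in> ?V" and f: "f \<in> borel_measurable borel"
     and b: "\<And>y. \<bar>f y\<bar> \<le> 1" for x and f :: "real \<Rightarrow> real"
  proof -
    interpret X: prob_space "d x" by (rule ps[OF x])
    show ?thesis
    proof (rule X.integrable_const_bound[where B=1])
      show "AE y in d x. norm (f y) \<le> 1" using b by simp
      show "f \<in> borel_measurable (d x)" using f measurable_cong_sets[OF sb[OF x] refl] by blast
    qed
  qed
  have goI: "integrable (d x) (go u)" if "x \<in> ?V" for x u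
    by (rule bint_d[OF that gob]) (simp add: go_def indicator_def)
  have hoI: "integrable (d x) ho" if "x \<in> ?V" for x
    by (rule bint_d[OF that hob]) (simp add: ho_def indicator_def)
  have oneI: "integrable (d x) (\<lambda>_. 1::real)" if "x \<in> ?V" for x
    by (rule bint_d[OF that]) auto
  have one1: "integral\<^sup>L (d x) (\<lambda>_. 1::real) = 1" if "x \<in> ?V" for x
    using prob_space.prob_space[OF ps[OF that]] by simp
  have comp: "(\<lambda>w. f (w i)) \<in> borel_measurable P" if i: "i \<in> ?V" and f: "f \<in> borel_measurable borel"
    for i and f :: "real \<Rightarrow> real"
  proof -
    have "f \<in> borel_measurable (d i)" using f measurable_cong_sets[OF sb[OF i] refl] by blast
    thus ?thesis unfolding P_def by (rule measurable_compose[OF measurable_component_singleton[OF i]])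
  qed
  define Y where "Y w = (\<Prod>u\<in>H. ho (w u))" for w
  have Yval: "Y w = (if \<forall>u\<in>H. out (I v) (w u) then 1 else 0)" for w
  proof (cases "\<forall>u\<in>H. out (I v) (w u)")
    case True thus ?thesis unfolding Y_def ho_def by (simp add: indicator_def)
  next
    case False
    then obtain u where "u \<in> H" "\<not> out (I v) (w u)" by auto
    hence "Y w = 0" unfolding Y_def ho_def using finH by (intro prod_zero) (auto simp: indicator_def)
    thus ?thesis using False by simp
  qed
  have goval: "go u x = (if out (I u) x then 0 else 1)" for u x by (simp add: go_def indicator_def)
  have Ym: "Y \<in> borel_measurable P" unfolding Y_def
    by (intro borel_measurable_prod comp hob) auto
  have gom: "(\<lambda>w. go u (w v)) \<in> borel_measurable P" for u by (intro comp gob) auto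
  have bint: "integrable P f" if "f \<in> borel_measurable P" "\<And>w. \<bar>f w\<bar> \<le> B" for f :: "_ \<Rightarrow> real" and B :: real
    by (rule P.integrable_const_bound[where B=B]) (use that in auto)
  have YI: "integrable P Y" by (rule bint[of Y 1, OF Ym]) (simp add: Yval)
  have goPI: "integrable P (\<lambda>w. go u (w v))" for u
    by (rule bint[of _ 1, OF gom]) (simp add: goval)
  have gYI: "integrable P (\<lambda>w. go u (w v) * Y w)" for u
    by (rule bint[of _ 1]) (use gom Ym in auto, simp add: goval Yval)

  have key: "(\<integral>w. fv (w v) * (\<Prod>u\<in>H. fh (w u)) \<partial>P) = integral\<^sup>L (d v) fv * (\<Prod>u\<in>H. integral\<^sup>L (d u) fh)"
    if fvI: "integrable (d v) fv" and fhI: "\<And>u. u \<in> H \<Longrightarrow> integrable (d u) fh" for fv fh :: "real \<Rightarrow> real"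
  proof -
    define f where "f i = (if i = v then fv else fh)" for i
    have 1: "(\<integral>w. (\<Prod>i\<in>?V. f i (w i)) \<partial>P) = (\<Prod>i\<in>?V. integral\<^sup>L (d i) (f i))"
      unfolding P_def by (rule prod_int[OF finV ps]) (use fvI fhI in \<open>auto simp: f_def\<close>)
    have 2: "(\<Prod>i\<in>?V. f i (w i)) = fv (w v) * (\<Prod>u\<in>H. fh (w u))" for w
    proof -
      have "(\<Prod>i\<in>?V. f i (w i)) = f v (w v) * (\<Prod>u\<in>H. f u (w u))" by (rule prod.insert[OF finH assms(1)])
      moreover have "(\<Prod>u\<in>H. f u (w u)) = (\<Prod>u\<in>H. fh (w u))"
        by (rule prod.cong) (use assms(1) in \<open>auto simp: f_def\<close>)
      ultimately show ?thesis by (simp add: f_def)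
    qed
    have 3: "(\<Prod>i\<in>?V. integral\<^sup>L (d i) (f i)) = integral\<^sup>L (d v) fv * (\<Prod>u\<in>H. integral\<^sup>L (d u) fh)"
    proof -
      have "(\<Prod>i\<in>?V. integral\<^sup>L (d i) (f i)) = integral\<^sup>L (d v) (f v) * (\<Prod>u\<in>H. integral\<^sup>L (d u) (f u))"
        by (rule prod.insert[OF finH assms(1)])
      moreover have "(\<Prod>u\<in>H. integral\<^sup>L (d u) (f u)) = (\<Prod>u\<in>H. integral\<^sup>L (d u) fh)"
        by (rule prod.cong) (use assms(1) in \<open>auto simp: f_def\<close>)
      ultimately show ?thesis by (simp add: f_def)
    qed
    show ?thesis using 1 unfolding 2 3 .
  qed
  define \<rho> where "\<rho> = (\<Prod>u\<in>H. integral\<^sup>L (d u) ho)"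
  define \<gamma> where "\<gamma> u = integral\<^sup>L (d v) (go u)" for u
  have prod1: "(\<Prod>u\<in>H. integral\<^sup>L (d u) (\<lambda>_. 1::real)) = 1"
    by (rule prod.neutral) (use one1 in blast)
  have EY: "integral\<^sup>L P Y = \<rho>"
  proof -
    have "(\<integral>w. (\<lambda>_. 1::real) (w v) * (\<Prod>u\<in>H. ho (w u)) \<partial>P) = integral\<^sup>L (d v) (\<lambda>_. 1::real) * \<rho>"
      unfolding \<rho>_def by (rule key) (auto intro: oneI hoI)
    moreover have "Y = (\<lambda>w. \<Prod>u\<in>H. ho (w u))" by (rule ext) (simp add: Y_def)
    ultimately show ?thesis using one1[of v] by simp
  qed
  have EG: "(\<integral>w. go u (w v) \<partial>P) = \<gamma> u" for u
  proof -
    have "(\<integral>w. go u (w v) * (\<Prod>u\<in>H. (\<lambda>_. 1::real) (w u)) \<partial>P) = \<gamma> u * (\<Prod>u\<in>H. integral\<^sup>L (d u) (\<lambda>_. 1::real))"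
      unfolding \<gamma>_def by (rule key) (auto intro: oneI goI)
    thus ?thesis using prod1 by simp
  qed
  have EYG: "(\<integral>w. go u (w v) * Y w \<partial>P) = \<gamma> u * \<rho>" for u
    unfolding \<gamma>_def \<rho>_def Y_def by (rule key) (auto intro: hoI goI)
  have pu: "mandatory_prob ?V ?E I d u = \<gamma> u" if u: "u \<in> H" for u
  proof -
    have "mandatory_prob ?V ?E I d u = integral\<^sup>L P (indicator {w \<in> space P. mandatory ?V ?E I w u})"
      unfolding mandatory_prob_def P_def[symmetric] Bochner_Integration.integral_indicator
      by (rule arg_cong[where f="measure P"]) auto
    also have "\<dots> = (\<integral>w. go u (w v) \<partial>P)"
      by (rule Bochner_Integration.integral_cong[OF refl]) (simp add: indicator_def st.mand_u[OF u] goval)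
    finally show ?thesis using EG by simp
  qed
  have pv: "mandatory_prob ?V ?E I d v = 1 - \<rho>"
  proof -
    have "mandatory_prob ?V ?E I d v = integral\<^sup>L P (indicator {w \<in> space P. mandatory ?V ?E I w v})"
      unfolding mandatory_prob_def P_def[symmetric] Bochner_Integration.integral_indicator
      by (rule arg_cong[where f="measure P"]) auto
    also have "\<dots> = (\<integral>w. 1 - Y w \<partial>P)"
      by (rule Bochner_Integration.integral_cong[OF refl]) (simp add: indicator_def st.mand_v Yval)
    also have "\<dots> = 1 - \<rho>" using YI EY P.prob_space by (simp add: Bochner_Integration.integral_diff)
    finally show ?thesis .
  qed
  define a where "a = (\<lambda>w. \<Sum>u\<in>H. c u * go u (w v))"
  define C where "C = sum c H"
  define k where "k = min (c v) C"
  define m where "m = (\<Sum>u\<in>H. \<gamma> u * c u)"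
  define S where "S = (\<lambda>w. \<Sum>u\<in>H. c u * (go u (w v) * Y w))"
  define Fo where "Fo = (\<lambda>w. (1 - Y w) * (c v + a w) + Y w * min (c v + a w) C)"
  define G where "G = (\<lambda>w. a w + (c v - Y w * c v) + Y w * k - k / C * S w)"
  have cH: "\<And>u. u \<in> H \<Longrightarrow> 0 \<le> c u" using cnn by auto
  have a0: "0 \<le> a w" for w unfolding a_def using cH
    by (intro sum_nonneg) (simp add: goval)
  have aC: "a w \<le> C" for w unfolding a_def C_def using cH
    by (intro sum_mono) (simp add: goval)
  have aval: "sum c {u \<in> H. \<not> out (I u) (w v)} = a w" for w
    unfolding a_def sum.inter_filter[OF finH] by (intro sum.cong) (auto simp: goval)
  have optF: "opt_cost ?V ?E I c w = Fo w" for w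
    using st.opt[where c=c and w=w, OF finH cnn] unfolding aval Fo_def C_def by (simp add: Yval)
  have Fom: "Fo \<in> borel_measurable P" unfolding Fo_def a_def
    using gom Ym by measurable
  have FoI: "integrable P Fo"
  proof (rule bint[of Fo "c v + C", OF Fom])
    fix w
    show "\<bar>Fo w\<bar> \<le> c v + C" using a0[of w] aC[of w] cnn[of v]
      by (cases "\<forall>u\<in>H. out (I v) (w u)") (auto simp: Fo_def Yval)
  qed
  have aI: "integrable P a" unfolding a_def using goPI by auto
  have SI: "integrable P S" unfolding S_def using gYI by auto
  have Ea: "integral\<^sup>L P a = m" unfolding a_def m_def using goPI
    by (simp add: EG mult.commute)
  have ES: "integral\<^sup>L P S = \<rho> * m"
  proof -
    have "integral\<^sup>L P S = (\<Sum>u\<in>H. integral\<^sup>L P (\<lambda>w. c u * (go u (w v) * Y w)))"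
      unfolding S_def by (rule Bochner_Integration.integral_sum) (use gYI in auto)
    also have "\<dots> = (\<Sum>u\<in>H. c u * (\<gamma> u * \<rho>))"
      by (rule sum.cong[OF refl]) (simp only: integral_mult_right_zero EYG)
    also have "\<dots> = \<rho> * m" unfolding m_def by (simp add: sum_distrib_left mult_ac)
    finally show ?thesis .
  qed
  have GI: "integrable P G" unfolding G_def using aI YI SI by auto
  have EGt: "integral\<^sup>L P G = m + (c v - \<rho> * c v) + \<rho> * k - k / C * (\<rho> * m)"
    unfolding G_def using aI YI SI P.prob_space by (simp add: Ea ES EY)
  have GF: "G w \<le> Fo w" for w
  proof (cases "\<forall>u\<in>H. out (I v) (w u)")
    case True
    have "S w = a w" unfolding S_def a_def by (simp add: Yval True)
    thus ?thesis using True ar1[OF a0 aC cnn[of v] k_def] unfolding G_def Fo_def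
      by (simp add: Yval)
  next
    case False
    have Y0: "Y w = 0" using False by (simp add: Yval)
    have "S w = 0" unfolding S_def by (simp add: Y0)
    thus ?thesis unfolding G_def Fo_def by (simp add: Y0)
  qed
  have eo: "expected_opt ?V ?E I c d = integral\<^sup>L P Fo"
    unfolding expected_opt_def P_def[symmetric]
    by (rule Bochner_Integration.integral_cong[OF refl]) (rule optF)
  have mono: "integral\<^sup>L P G \<le> integral\<^sup>L P Fo"
    by (rule integral_mono[OF GI FoI]) (rule GF)
  have lhs: "(\<Sum>u\<in>H. mandatory_prob ?V ?E I d u * c u) = m"
    unfolding m_def by (rule sum.cong) (auto simp: pu)
  have r0: "0 \<le> \<rho>" unfolding EY[symmetric]
    by (rule Bochner_Integration.integral_nonneg) (simp add: Yval)
  have r1: "\<rho> \<le> 1" using pv measure_nonneg[of P] unfolding mandatory_prob_def P_def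
    by (metis diff_ge_0_iff_ge)
  have m0: "0 \<le> m" unfolding m_def
  proof (rule sum_nonneg)
    fix u assume u: "u \<in> H"
    have "0 \<le> \<gamma> u" using pu[OF u] unfolding mandatory_prob_def by (metis measure_nonneg)
    thus "0 \<le> \<gamma> u * c u" using cH[OF u] by simp
  qed
  have Ceq: "C = m + \<rho> * c v" using assms(3) unfolding lhs pv C_def by (simp add: algebra_simps)
  have "c v + m \<le> 4 / 3 * integral\<^sup>L P G"
    unfolding EGt by (rule ar2[OF m0 cnn[of v] r0 r1 Ceq k_def]) simp
  also have "\<dots> \<le> 4 / 3 * integral\<^sup>L P Fo" using mono by simp
  finally show ?thesis unfolding lhs eo .
qed


end
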